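(* Let $M$ be a monoid. Then $\mathfrak{L}(\mathrm{Val},\mathrm{CF},M^0)=\mathfrak{L}(\mathrm{Val},\mathrm{CF},M)$.
   Context: $M^0=M\cup\{0\}$ (with a new zero element adjoined) if $M$ has no zero element, and $M^0=M$ otherwise. A context-free valence grammar over a monoid $N$ is $(V,T,P,S,N)$ with nonterminals $V$, terminals $T$, start symbol $S$ and a finite set $P$ of rules $(A\to\alpha,n)$ with $A\in V$, $\alpha\in(V\cup T)^*$, $n\in N$. One step: $(w_1Aw_2,m)\Rightarrow(w_1\alpha w_2,mn)$ for a rule $(A\to\alpha,n)$. The generated language is $\{w\in T^*:(S,1)\Rightarrow^*(w,1)\}$. $\mathfrak{L}(\mathrm{Val},\mathrm{CF},N)$ is the family of languages generated by such grammars over $N$. *)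

theory Defs
  imports "HOL-Algebra.Group"
begin

text \<open>Grammar symbols: Inl A is a nonterminal, Inr a is a terminal.
  Nonterminals are taken from type nat (V is a finite set of them).\<close>

type_synonym ('n, 't) gsym = "'n + 't"

definition valence_cf_grammar ::
  "('m, 'b) monoid_scheme \<Rightarrow> 'n set \<Rightarrow> 't set \<Rightarrow> ('n \<times> ('n, 't) gsym list \<times> 'm) set \<Rightarrow> 'n \<Rightarrow> bool"
where
  "valence_cf_grammar N V T P S \<longleftrightarrow>
     finite V \<and> finite T \<and> finite P \<and> S \<in> V \<and>
     (\<forall>(A, \<alpha>, n) \<in> P. A \<in> V \<and> set \<alpha> \<subseteq> Inl ` V \<union> Inr ` T \<and> n \<in> carrier N)"

definition val_step ::
  "('m, 'b) monoid_scheme \<Rightarrow> ('n \<times> ('n, 't) gsym list \<times> 'm) set \<Rightarrow>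
   (('n, 't) gsym list \<times> 'm) \<Rightarrow> (('n, 't) gsym list \<times> 'm) \<Rightarrow> bool"
where
  "val_step N P c c' \<longleftrightarrow>
     (\<exists>w1 w2 A \<alpha> n. (A, \<alpha>, n) \<in> P \<and> fst c = w1 @ [Inl A] @ w2 \<and>
        fst c' = w1 @ \<alpha> @ w2 \<and> snd c' = snd c \<otimes>\<^bsub>N\<^esub> n)"

definition val_lang ::
  "('m, 'b) monoid_scheme \<Rightarrow> 't set \<Rightarrow> ('n \<times> ('n, 't) gsym list \<times> 'm) set \<Rightarrow> 'n \<Rightarrow> 't list set"
where
  "val_lang N T P S =
     {w \<in> lists T. (val_step N P)\<^sup>*\<^sup>* ([Inl S], \<one>\<^bsub>N\<^esub>) (map Inr w, \<one>\<^bsub>N\<^esub>)}"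

definition L_Val_CF :: "('m, 'b) monoid_scheme \<Rightarrow> 't list set set" where
  "L_Val_CF N = {L. \<exists>(V :: nat set) T P S. valence_cf_grammar N V T P S \<and> L = val_lang N T P S}"

definition has_zero :: "('m, 'b) monoid_scheme \<Rightarrow> bool" where
  "has_zero M \<longleftrightarrow> (\<exists>z \<in> carrier M. \<forall>x \<in> carrier M. z \<otimes>\<^bsub>M\<^esub> x = z \<and> x \<otimes>\<^bsub>M\<^esub> z = z)"

text \<open>M^0: M with a new zero (None) adjoined if M has no zero; otherwise an isomorphic copy of M.\<close>

definition adjoin_zero :: "('m, 'b) monoid_scheme \<Rightarrow> 'm option monoid" where
  "adjoin_zero M =
     (if has_zero M then
        \<lparr>carrier = Some ` carrier M,
         mult = (\<lambda>x y. Some (the x \<otimes>\<^bsub>M\<^esub> the y)),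
         one = Some \<one>\<^bsub>M\<^esub>\<rparr>
      else
        \<lparr>carrier = insert None (Some ` carrier M),
         mult = (\<lambda>x y. case (x, y) of (Some a, Some b) \<Rightarrow> Some (a \<otimes>\<^bsub>M\<^esub> b) | _ \<Rightarrow> None),
         one = Some \<one>\<^bsub>M\<^esub>\<rparr>)"

end

theory Submission
  imports Defs
begin

lemma az_one: "one (adjoin_zero M) = Some (one M)"
  by (simp add: adjoin_zero_def)

lemma az_mult: "Some a \<otimes>\<^bsub>adjoin_zero M\<^esub> Some b = Some (a \<otimes>\<^bsub>M\<^esub> b)"
  by (simp add: adjoin_zero_def)

lemma az_carrier_Some: "x \<in> carrier M \<Longrightarrow> Some x \<in> carrier (adjoin_zero M)"
  by (simp add: adjoin_zero_def)

lemma az_carrier: "carrier (adjoin_zero M) \<subseteq> insert None (Some ` carrier M)"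
  by (auto simp add: adjoin_zero_def)

lemma az_None_nz: "None \<in> carrier (adjoin_zero M) \<Longrightarrow> \<not> has_zero M"
  by (auto simp add: adjoin_zero_def split: if_splits)

lemma az_None_mult: "\<not> has_zero M \<Longrightarrow> None \<otimes>\<^bsub>adjoin_zero M\<^esub> y = None"
  by (simp add: adjoin_zero_def)

lemma az_mult_None: "\<not> has_zero M \<Longrightarrow> y \<otimes>\<^bsub>adjoin_zero M\<^esub> None = None"
  by (cases y) (simp_all add: adjoin_zero_def)

lemma persist:
  assumes "(val_step (adjoin_zero M) P')\<^sup>*\<^sup>* c d" "\<not> has_zero M" "snd c = None"
  shows "snd d = None"
  using assms(1,3)
proof (induction rule: rtranclp_induct)
  case base then show ?case by simp
next
  case (step y z)
  then show ?case using az_None_mult[OF assms(2)] by (auto simp: val_step_def)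
qed

lemma liftA:
  assumes "(val_step M P)\<^sup>*\<^sup>* c d"
    and "\<And>A \<alpha> k. (A, \<alpha>, k) \<in> P \<Longrightarrow> (A, \<alpha>, Some k) \<in> P'"
  shows "(val_step (adjoin_zero M) P')\<^sup>*\<^sup>* (fst c, Some (snd c)) (fst d, Some (snd d))"
  using assms(1)
proof (induction rule: rtranclp_induct)
  case base then show ?case by simp
next
  case (step y z)
  from step(2) obtain w1 w2 A \<alpha> n where h: "(A, \<alpha>, n) \<in> P" "fst y = w1 @ [Inl A] @ w2"
    "fst z = w1 @ \<alpha> @ w2" "snd z = snd y \<otimes>\<^bsub>M\<^esub> n" by (auto simp: val_step_def)
  have "val_step (adjoin_zero M) P' (fst y, Some (snd y)) (fst z, Some (snd z))"
    unfolding val_step_def using h assms(2)[OF h(1)]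
    by (intro exI[of _ w1] exI[of _ w2] exI[of _ A] exI[of _ \<alpha>] exI[of _ "Some n"]) (simp add: az_mult)
  then show ?case using step(3) by (simp add: rtranclp.rtrancl_into_rtrancl)
qed

lemma liftB:
  assumes "(val_step (adjoin_zero M) P')\<^sup>*\<^sup>* c d"
    and "\<And>A \<alpha> k. (A, \<alpha>, Some k) \<in> P' \<Longrightarrow> (A, \<alpha>, k) \<in> P"
    and "\<And>A \<alpha> n. (A, \<alpha>, n) \<in> P' \<Longrightarrow> n \<in> carrier (adjoin_zero M)"
  shows "\<And>m m'. snd c = Some m \<Longrightarrow> snd d = Some m' \<Longrightarrow>
     (val_step M P)\<^sup>*\<^sup>* (fst c, m) (fst d, m')"
  using assms(1)
proof (induction rule: converse_rtranclp_induct)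
  case base then show ?case by simp
next
  case (step y z)
  from step(1) obtain w1 w2 A \<alpha> n where h: "(A, \<alpha>, n) \<in> P'" "fst y = w1 @ [Inl A] @ w2"
    "fst z = w1 @ \<alpha> @ w2" "snd z = snd y \<otimes>\<^bsub>adjoin_zero M\<^esub> n" by (auto simp: val_step_def)
  show ?case
  proof (cases n)
    case None
    then have nz: "\<not> has_zero M" using assms(3)[OF h(1)] az_None_nz by blast
    then have "snd z = None" using h(4) None az_mult_None by metis
    then have "snd d = None" using persist[OF step(2) nz] by blast
    then show ?thesis using step by simp
  next
    case (Some k)
    have zs: "snd z = Some (m \<otimes>\<^bsub>M\<^esub> k)" using h(4) Some step(4) by (simp add: az_mult)
    have "(val_step M P)\<^sup>*\<^sup>* (fst z, m \<otimes>\<^bsub>M\<^esub> k) (fst d, m')" using step(3)[OF zs step(5)] .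
    moreover have "val_step M P (fst y, m) (fst z, m \<otimes>\<^bsub>M\<^esub> k)"
      unfolding val_step_def using h assms(2) Some
      by (intro exI[of _ w1] exI[of _ w2] exI[of _ A] exI[of _ \<alpha>] exI[of _ k]) simp
    ultimately show ?thesis by (rule converse_rtranclp_into_rtranclp[rotated])
  qed
qed

lemma lang_eq:
  assumes "\<And>A \<alpha> k. (A, \<alpha>, k) \<in> P \<longleftrightarrow> (A, \<alpha>, Some k) \<in> P'"
    and "\<And>A \<alpha> n. (A, \<alpha>, n) \<in> P' \<Longrightarrow> n \<in> carrier (adjoin_zero M)"
  shows "val_lang (adjoin_zero M) T P' S = val_lang M T P S"
proof -
  have "(val_step (adjoin_zero M) P')\<^sup>*\<^sup>* ([Inl S], Some \<one>\<^bsub>M\<^esub>) (w, Some \<one>\<^bsub>M\<^esub>)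
     \<longleftrightarrow> (val_step M P)\<^sup>*\<^sup>* ([Inl S], \<one>\<^bsub>M\<^esub>) (w, \<one>\<^bsub>M\<^esub>)" for w
  proof
    assume "(val_step (adjoin_zero M) P')\<^sup>*\<^sup>* ([Inl S], Some \<one>\<^bsub>M\<^esub>) (w, Some \<one>\<^bsub>M\<^esub>)"
    moreover have "\<And>A \<alpha> k. (A, \<alpha>, Some k) \<in> P' \<Longrightarrow> (A, \<alpha>, k) \<in> P" using assms(1) by blast
    ultimately have "(val_step M P)\<^sup>*\<^sup>* (fst ([Inl S], Some \<one>\<^bsub>M\<^esub>), \<one>\<^bsub>M\<^esub>) (fst (w, Some \<one>\<^bsub>M\<^esub>), \<one>\<^bsub>M\<^esub>)"
      by (rule liftB[OF _ _ assms(2)]) simp_all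
    then show "(val_step M P)\<^sup>*\<^sup>* ([Inl S], \<one>\<^bsub>M\<^esub>) (w, \<one>\<^bsub>M\<^esub>)" by simp
  next
    assume h1: "(val_step M P)\<^sup>*\<^sup>* ([Inl S], \<one>\<^bsub>M\<^esub>) (w, \<one>\<^bsub>M\<^esub>)"
    have h2: "\<And>A \<alpha> k. (A, \<alpha>, k) \<in> P \<Longrightarrow> (A, \<alpha>, Some k) \<in> P'" using assms(1) by blast
    from liftA[OF h1 h2]
    show "(val_step (adjoin_zero M) P')\<^sup>*\<^sup>* ([Inl S], Some \<one>\<^bsub>M\<^esub>) (w, Some \<one>\<^bsub>M\<^esub>)"
      by simp
  qed
  then show ?thesis by (simp add: val_lang_def az_one)
qed

theorem proposition4:
  fixes M :: "'m monoid"
  assumes "monoid M"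
  shows "(L_Val_CF (adjoin_zero M) :: 't list set set) = L_Val_CF M"
proof (intro equalityI subsetI)
  fix L :: "'t list set"
  assume "L \<in> L_Val_CF (adjoin_zero M)"
  then obtain V :: "nat set" and T P' S where g: "valence_cf_grammar (adjoin_zero M) V T P' S"
    and L: "L = val_lang (adjoin_zero M) T P' S" unfolding L_Val_CF_def by blast
  define P where "P = (\<lambda>(A, \<alpha>, n). (A, \<alpha>, the n)) ` {r \<in> P'. snd (snd r) \<noteq> None}"
  have car: "\<And>A \<alpha> n. (A, \<alpha>, n) \<in> P' \<Longrightarrow> n \<in> carrier (adjoin_zero M)"
    using g unfolding valence_cf_grammar_def by blast
  have iff: "(A, \<alpha>, k) \<in> P \<longleftrightarrow> (A, \<alpha>, Some k) \<in> P'" for A \<alpha> k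
  proof
    assume "(A, \<alpha>, k) \<in> P"
    then obtain n where "(A, \<alpha>, n) \<in> P'" "n \<noteq> None" "k = the n" unfolding P_def by auto
    then show "(A, \<alpha>, Some k) \<in> P'" by auto
  next
    assume "(A, \<alpha>, Some k) \<in> P'"
    then show "(A, \<alpha>, k) \<in> P" unfolding P_def by (force intro: image_eqI[where x="(A, \<alpha>, Some k)"])
  qed
  have "valence_cf_grammar M V T P S"
  proof -
    have "finite P" using g unfolding valence_cf_grammar_def P_def by auto
    moreover have "\<forall>(A, \<alpha>, n) \<in> P. A \<in> V \<and> set \<alpha> \<subseteq> Inl ` V \<union> Inr ` T \<and> n \<in> carrier M"
    proof (clarify)
      fix A \<alpha> k assume "(A, \<alpha>, k) \<in> P"
      then have r: "(A, \<alpha>, Some k) \<in> P'" using iff by blast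
      then have "Some k \<in> carrier (adjoin_zero M)" using car by blast
      then have "k \<in> carrier M" using az_carrier by blast
      then show "A \<in> V \<and> set \<alpha> \<subseteq> Inl ` V \<union> Inr ` T \<and> k \<in> carrier M"
        using g r unfolding valence_cf_grammar_def by blast
    qed
    ultimately show ?thesis using g unfolding valence_cf_grammar_def by blast
  qed
  moreover have "L = val_lang M T P S" using L lang_eq[OF iff car] by simp
  ultimately show "L \<in> L_Val_CF M" unfolding L_Val_CF_def by blast
next
  fix L :: "'t list set"
  assume "L \<in> L_Val_CF M"
  then obtain V :: "nat set" and T P S where g: "valence_cf_grammar M V T P S"
    and L: "L = val_lang M T P S" unfolding L_Val_CF_def by blast
  define P' where "P' = (\<lambda>(A, \<alpha>, n). (A, \<alpha>, Some n)) ` P"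
  have iff: "(A, \<alpha>, k) \<in> P \<longleftrightarrow> (A, \<alpha>, Some k) \<in> P'" for A \<alpha> k
    unfolding P'_def by force
  have car: "\<And>A \<alpha> n. (A, \<alpha>, n) \<in> P' \<Longrightarrow> n \<in> carrier (adjoin_zero M)"
    using g unfolding valence_cf_grammar_def P'_def by (auto intro: az_carrier_Some)
  have "valence_cf_grammar (adjoin_zero M) V T P' S"
    using g car unfolding valence_cf_grammar_def P'_def by (fastforce intro: az_carrier_Some)
  moreover have "L = val_lang (adjoin_zero M) T P' S" using L lang_eq[OF iff car] by simp
  ultimately show "L \<in> L_Val_CF (adjoin_zero M)" unfolding L_Val_CF_def by blast
qed

end
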